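(* Let $B(x)=\sum_{n\ge 0} b(n)x^n$ be a formal power series with $b(0)\neq 0$, let $B^{\Delta}(n,k)$ be the composita of $xB(x)$ (so in particular $B^{\Delta}(1,1)=b(0)$), and let $A(x)=1/B(x)$ be the reciprocal series, i.e. $A(x)B(x)=1$. Then the composita $A^{\Delta}(n,m)$ of $xA(x)$ is, for $n\ge m\ge 1$, $$A^{\Delta}(n,m)=\begin{cases}\dfrac{1}{B^{\Delta}(1,1)^m}, & n=m,\\[6pt] \dfrac{1}{B^{\Delta}(1,1)^m}\displaystyle\sum_{k=1}^{n-m}\binom{m+k-1}{m-1}\sum_{j=1}^{k}\frac{(-1)^j}{B^{\Delta}(1,1)^j}\binom{k}{j}B^{\Delta}(n-m+j,j), & n>m.\end{cases}$$
   Context: All generating functions are formal power series in $x$. For a power series $F(x)=\sum_{n\ge 1} f(n)x^n$ with zero constant term, its composita is the two-variable function $F^{\Delta}(n,k)$ ($n\ge k\ge 1$) defined by $F^{\Delta}(n,k)=\sum_{\lambda_1+\cdots+\lambda_k=n}f(\lambda_1)f(\lambda_2)\cdots f(\lambda_k)$, where the sum runs over all compositions of $n$ into exactly $k$ positive integer parts; equivalently $[F(x)]^k=\sum_{n\ge k}F^{\Delta}(n,k)x^n$. *)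

theory Defs
  imports "HOL-Computational_Algebra.Formal_Power_Series"
begin

definition compositions :: "nat \<Rightarrow> nat \<Rightarrow> nat list set" where
  "compositions n k = {xs. length xs = k \<and> (\<forall>x\<in>set xs. 0 < x) \<and> sum_list xs = n}"

definition composita :: "'a::comm_semiring_1 fps \<Rightarrow> nat \<Rightarrow> nat \<Rightarrow> 'a" where
  "composita F n k = (\<Sum>xs\<in>compositions n k. prod_list (map (fps_nth F) xs))"

end

theory Submission
  imports Defs
begin
unbundle fps_syntax

lemma compositions_Suc: "compositions n (Suc k) = (\<Union>l\<in>{1..n}. (#) l ` compositions (n-l) k)"
proof (rule set_eqI, rule iffI)
  fix xs assume "xs \<in> compositions n (Suc k)"
  then obtain x ys where xs: "xs = x # ys" and h: "length ys = k" "0 < x" "\<forall>y\<in>set ys. 0 < y" "x + sum_list ys = n"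
    unfolding compositions_def by (cases xs) auto
  then have "ys \<in> compositions (n-x) k" unfolding compositions_def by simp
  moreover have "x \<in> {1..n}" using h by simp
  ultimately show "xs \<in> (\<Union>l\<in>{1..n}. (#) l ` compositions (n-l) k)"
    unfolding xs by blast
next
  fix xs assume "xs \<in> (\<Union>l\<in>{1..n}. (#) l ` compositions (n-l) k)"
  then obtain l ys where "l \<in> {1..n}" "ys \<in> compositions (n-l) k" "xs = l # ys" by blast
  then show "xs \<in> compositions n (Suc k)" unfolding compositions_def by auto
qed
lemma finite_compositions: "finite (compositions n k)"
proof (rule finite_subset)
  show "compositions n k \<subseteq> {xs. set xs \<subseteq> {0..n} \<and> length xs = k}"
    unfolding compositions_def using member_le_sum_list by fastforce
  show "finite {xs. set xs \<subseteq> {0..n} \<and> length xs = k}"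
    by (rule finite_lists_length_eq) simp
qed

lemma compositions_0: "compositions n 0 = (if n = 0 then {[]} else {})"
  unfolding compositions_def by auto

lemma composita_eq:
  fixes F :: "'a::comm_semiring_1 fps"
  assumes F0: "F $ 0 = 0"
  shows "composita F n k = (F ^ k) $ n"
proof (induction k arbitrary: n)
  case 0
  then show ?case by (simp add: composita_def compositions_0)
next
  case (Suc k)
  have "composita F n (Suc k) = (\<Sum>l\<in>{1..n}. \<Sum>xs\<in>(#) l ` compositions (n-l) k. prod_list (map (fps_nth F) xs))"
    unfolding composita_def compositions_Suc
    by (rule sum.UNION_disjoint) (simp_all add: finite_compositions, blast)
  also have "\<dots> = (\<Sum>l\<in>{1..n}. F $ l * composita F (n-l) k)"
  proof (rule sum.cong[OF refl])
    fix l assume "l \<in> {1..n}"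
    have "(\<Sum>xs\<in>(#) l ` compositions (n-l) k. prod_list (map (fps_nth F) xs))
        = (\<Sum>xs\<in>compositions (n-l) k. prod_list (map (fps_nth F) (l # xs)))"
      by (rule sum.reindex_cong[where l="(#) l"]) auto
    also have "\<dots> = F $ l * composita F (n-l) k" by (simp add: composita_def sum_distrib_left)
    finally show "(\<Sum>xs\<in>(#) l ` compositions (n-l) k. prod_list (map (fps_nth F) xs)) = F $ l * composita F (n-l) k" .
  qed
  also have "\<dots> = (\<Sum>l\<in>{1..n}. F $ l * (F^k) $ (n-l))" using Suc by simp
  also have "\<dots> = (\<Sum>l=0..n. F $ l * (F^k) $ (n-l))"
    by (subst sum.atLeast_Suc_atMost[of 0 n]) (simp_all add: F0)
  also have "\<dots> = (F ^ Suc k) $ n" by (simp add: fps_mult_nth)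
  finally show ?case .
qed

definition Gm :: "nat \<Rightarrow> 'a::comm_ring_1 fps" where
  "Gm m = Abs_fps (\<lambda>k. of_nat ((m+k-1) choose (m-1)))"

lemma mult_1_minus_X_nth:
  fixes f :: "'a::comm_ring_1 fps"
  shows "(f * (1 - fps_X)) $ k = f $ k - (if k = 0 then 0 else f $ (k - 1))"
proof -
  have "f * (1 - fps_X) = f - fps_X * f" by (simp add: algebra_simps)
  then show ?thesis by simp
qed

lemma Gm_1: "(Gm 1 :: 'a::comm_ring_1 fps) * (1 - fps_X) = 1"
  by (rule fps_ext) (simp add: mult_1_minus_X_nth Gm_def)

lemma Gm_step: "(Gm (Suc (Suc p)) :: 'a::comm_ring_1 fps) * (1 - fps_X) = Gm (Suc p)"
proof (rule fps_ext)
  fix k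
  show "(Gm (Suc (Suc p)) * (1 - fps_X)) $ k = (Gm (Suc p) :: 'a fps) $ k"
  proof (cases k)
    case 0 then show ?thesis by (simp add: mult_1_minus_X_nth Gm_def binomial_eq_0)
  next
    case (Suc q)
    have "Suc (Suc p) + k - 1 = Suc (p + Suc q)" using Suc by simp
    moreover have "Suc (Suc p) + (k - 1) - 1 = p + Suc q" using Suc by simp
    moreover have "Suc p + k - 1 = p + Suc q" using Suc by simp
    moreover have "Suc (p + Suc q) choose Suc p = (p + Suc q choose p) + (p + Suc q choose Suc p)"
      by (rule binomial_Suc_Suc)
    ultimately show ?thesis using Suc by (simp add: mult_1_minus_X_nth Gm_def)
  qed
qed

lemma Gm_inv: "(Gm (Suc p) :: 'a::comm_ring_1 fps) * (1 - fps_X) ^ Suc p = 1"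
proof (induction p)
  case 0 then show ?case using Gm_1 by simp
next
  case (Suc p)
  have "(Gm (Suc (Suc p)) :: 'a fps) * (1 - fps_X) ^ Suc (Suc p)
      = (Gm (Suc (Suc p)) * (1 - fps_X)) * (1 - fps_X) ^ Suc p"
    by (simp only: power_Suc mult.assoc)
  also have "\<dots> = 1" by (simp only: Gm_step Suc.IH)
  finally show ?case .
qed

lemma key:
  fixes A B :: "'a::field fps"
  assumes B0: "B $ 0 \<noteq> 0" and AB: "A * B = 1" and m: "1 \<le> m"
  shows "(A ^ m) $ N = 1 / (B $ 0) ^ m * (\<Sum>k=0..N. of_nat ((m+k-1) choose (m-1)) *
           (\<Sum>j\<le>k. of_nat (k choose j) * (- inverse (B $ 0)) ^ j * (B ^ j) $ N))"
proof -
  define c where "c = B $ 0"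
  define E where "E = 1 - fps_const (inverse c) * B"
  have c0: "c \<noteq> 0" using B0 c_def by simp
  have E0: "E $ 0 = 0" using c0 by (simp add: E_def c_def)
  have BE: "B = fps_const c * (1 - E)"
    using c0 by (simp add: E_def mult.assoc[symmetric] fps_const_mult[symmetric])
  obtain p where p: "m = Suc p" using m by (cases m) auto
  define Q where "Q = Gm m oo E"
  have XE: "(1 - fps_X) oo E = 1 - E" using E0 by (simp add: fps_compose_sub_distrib)
  have "Q * (1 - E) ^ m = (Gm m oo E) * ((1 - fps_X) ^ m oo E)"
    unfolding Q_def XE[symmetric] fps_compose_power[OF E0] ..
  also have "\<dots> = (Gm m * (1 - fps_X) ^ m) oo E"
    by (rule fps_compose_mult_distrib[OF E0, symmetric])
  also have "\<dots> = 1" by (simp only: p Gm_inv fps_compose_1)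
  finally have Q1: "Q * (1 - E) ^ m = 1" .
  have cE: "(fps_const c * (1 - E)) ^ m = fps_const (c ^ m) * (1 - E) ^ m"
    by (simp only: power_mult_distrib fps_const_power)
  have "(fps_const (c ^ m) * A ^ m) * (1 - E) ^ m = A ^ m * (fps_const c * (1 - E)) ^ m"
    by (simp only: cE ac_simps)
  also have "\<dots> = (A * B) ^ m" by (simp add: BE power_mult_distrib)
  also have "\<dots> = 1" using AB by simp
  finally have A1: "(fps_const (c ^ m) * A ^ m) * (1 - E) ^ m = 1" .
  have QA: "fps_const (c ^ m) * A ^ m = Q"
  proof -
    have "fps_const (c ^ m) * A ^ m = (fps_const (c ^ m) * A ^ m) * (Q * (1 - E) ^ m)" using Q1 by simp
    also have "\<dots> = Q * ((fps_const (c ^ m) * A ^ m) * (1 - E) ^ m)" by (simp add: algebra_simps)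
    also have "\<dots> = Q" using A1 by simp
    finally show ?thesis .
  qed
  have "c ^ m * (A ^ m) $ N = Q $ N" using QA[symmetric] by simp
  then have AN: "(A ^ m) $ N = 1 / c ^ m * Q $ N" using c0 by (simp add: field_simps)
  have EK: "(E ^ k) $ N = (\<Sum>j\<le>k. of_nat (k choose j) * (- inverse c) ^ j * (B ^ j) $ N)" for k
  proof -
    have "E = fps_const (- inverse c) * B + 1" by (simp add: E_def fps_const_neg[symmetric] del: fps_const_neg)
    then have "E ^ k = (\<Sum>j\<le>k. of_nat (k choose j) * (fps_const (- inverse c) * B) ^ j * 1 ^ (k - j))"
      by (simp add: binomial_ring)
    also have "\<dots> = (\<Sum>j\<le>k. fps_const (of_nat (k choose j) * (- inverse c) ^ j) * B ^ j)"
      by (simp only: power_mult_distrib fps_const_power mult_1 power_one mult_1_right fps_of_nat fps_const_mult[symmetric] mult.assoc)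
    finally show ?thesis by (simp add: fps_sum_nth)
  qed
  have "Q $ N = (\<Sum>k=0..N. of_nat ((m+k-1) choose (m-1)) *
           (\<Sum>j\<le>k. of_nat (k choose j) * (- inverse c) ^ j * (B ^ j) $ N))"
    unfolding Q_def fps_compose_nth EK by (simp add: Gm_def)
  then show ?thesis using AN c_def by simp
qed

theorem theorem2:
  fixes A B :: "'a::field fps" and n m :: nat
  assumes "fps_nth B 0 \<noteq> 0"
    and "A * B = 1"
    and "1 \<le> m" and "m \<le> n"
  shows "composita (fps_X * A) n m =
    (if n = m then 1 / composita (fps_X * B) 1 1 ^ m
     else 1 / composita (fps_X * B) 1 1 ^ m *
       (\<Sum>k=1..n-m. of_nat ((m+k-1) choose (m-1)) *
          (\<Sum>j=1..k. (-1)^j / composita (fps_X * B) 1 1 ^ j * of_nat (k choose j)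
                       * composita (fps_X * B) (n-m+j) j)))"
proof -
  define c where "c = B $ 0"
  define N where "N = n - m"
  have XA0: "(fps_X * A) $ 0 = 0" and XB0: "(fps_X * B) $ 0 = 0" by simp_all
  have L: "composita (fps_X * A) n m = (A ^ m) $ N"
    using assms(4) by (simp add: composita_eq[OF XA0] power_mult_distrib fps_X_power_mult_nth N_def)
  have C11: "composita (fps_X * B) 1 1 = c"
    by (simp add: composita_eq[OF XB0] c_def)
  have CJ: "composita (fps_X * B) (n-m+j) j = (B ^ j) $ N" for j
    by (simp add: composita_eq[OF XB0] power_mult_distrib fps_X_power_mult_nth N_def)
  have K: "(A ^ m) $ N = 1 / c ^ m * (\<Sum>k=0..N. of_nat ((m+k-1) choose (m-1)) *
           (\<Sum>j\<le>k. of_nat (k choose j) * (- inverse c) ^ j * (B ^ j) $ N))"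
    using key[OF assms(1-3)] c_def by simp
  show ?thesis
  proof (cases "n = m")
    case True
    then have "N = 0" by (simp add: N_def)
    then show ?thesis using True L K C11 by simp
  next
    case False
    then have N0: "N > 0" using assms(4) by (simp add: N_def)
    have S: "(\<Sum>j\<le>k. of_nat (k choose j) * (- inverse c) ^ j * (B ^ j) $ N)
        = (\<Sum>j=1..k. (-1)^j / c ^ j * of_nat (k choose j) * (B ^ j) $ N)" for k
    proof -
      have "(\<Sum>j\<le>k. of_nat (k choose j) * (- inverse c) ^ j * (B ^ j) $ N)
          = (\<Sum>j=0..k. of_nat (k choose j) * (- inverse c) ^ j * (B ^ j) $ N)"
        by (simp add: atMost_atLeast0)
      also have "\<dots> = (\<Sum>j=1..k. of_nat (k choose j) * (- inverse c) ^ j * (B ^ j) $ N)"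
        using N0 by (subst sum.atLeast_Suc_atMost) simp_all
      also have "\<dots> = (\<Sum>j=1..k. (-1)^j / c ^ j * of_nat (k choose j) * (B ^ j) $ N)"
      proof (rule sum.cong[OF refl])
        fix j
        have pw: "(- inverse c) ^ j = (-1) ^ j / c ^ j"
          by (subst power_minus) (simp add: power_inverse divide_inverse)
        show "of_nat (k choose j) * (- inverse c) ^ j * (B ^ j) $ N = (-1)^j / c ^ j * of_nat (k choose j) * (B ^ j) $ N"
          by (simp only: pw ac_simps)
      qed
      finally show ?thesis .
    qed
    have "(\<Sum>k=0..N. of_nat ((m+k-1) choose (m-1)) *
           (\<Sum>j\<le>k. of_nat (k choose j) * (- inverse c) ^ j * (B ^ j) $ N))
        = (\<Sum>k=1..N. of_nat ((m+k-1) choose (m-1)) *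
           (\<Sum>j=1..k. (-1)^j / c ^ j * of_nat (k choose j) * (B ^ j) $ N))"
      unfolding S by (subst sum.atLeast_Suc_atMost) simp_all
    then show ?thesis using False L K C11 CJ N_def by simp
  qed
qed

end
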